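(* Let $G$ be a finite nonabelian group such that the kernels of the nonlinear irreducible characters of $G$ are totally ordered by inclusion. If $M$ is a normal subgroup of $G$ with $M<G'$, then $M$ is a waist of $G$.
   Context: A nonlinear irreducible character is $\chi\in\mathrm{Irr}(G)$ with $\chi(1)>1$; $\ker\chi=\{g:\chi(g)=\chi(1)\}$. A waist of $G$ is a normal subgroup $W$ such that for every normal subgroup $N$ of $G$, either $N\le W$ or $W\le N$. *)

theory Defs
  imports "HOL-Algebra.Solvable_Groups" "Jordan_Normal_Form.Matrix"
begin

definition mat_tr :: "complex mat \<Rightarrow> complex" where
  "mat_tr A = (\<Sum>i<dim_row A. A $$ (i, i))"

definition is_rep :: "('g, 'b) monoid_scheme \<Rightarrow> nat \<Rightarrow> ('g \<Rightarrow> complex mat) \<Rightarrow> bool" where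
  "is_rep G n \<rho> \<longleftrightarrow> n > 0 \<and>
     (\<forall>g\<in>carrier G. \<rho> g \<in> carrier_mat n n) \<and>
     (\<forall>g\<in>carrier G. \<forall>h\<in>carrier G. \<rho> (g \<otimes>\<^bsub>G\<^esub> h) = \<rho> g * \<rho> h) \<and>
     \<rho> \<one>\<^bsub>G\<^esub> = 1\<^sub>m n"

definition invariant_subspace ::
  "('g, 'b) monoid_scheme \<Rightarrow> nat \<Rightarrow> ('g \<Rightarrow> complex mat) \<Rightarrow> complex vec set \<Rightarrow> bool" where
  "invariant_subspace G n \<rho> W \<longleftrightarrow> W \<subseteq> carrier_vec n \<and> 0\<^sub>v n \<in> W \<and>
     (\<forall>v\<in>W. \<forall>w\<in>W. v + w \<in> W) \<and> (\<forall>c. \<forall>v\<in>W. c \<cdot>\<^sub>v v \<in> W) \<and>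
     (\<forall>g\<in>carrier G. \<forall>v\<in>W. \<rho> g *\<^sub>v v \<in> W)"

definition irreducible_rep :: "('g, 'b) monoid_scheme \<Rightarrow> nat \<Rightarrow> ('g \<Rightarrow> complex mat) \<Rightarrow> bool" where
  "irreducible_rep G n \<rho> \<longleftrightarrow> is_rep G n \<rho> \<and>
     \<not> (\<exists>W. invariant_subspace G n \<rho> W \<and> W \<noteq> {0\<^sub>v n} \<and> W \<noteq> carrier_vec n)"

definition irr_chars :: "('g, 'b) monoid_scheme \<Rightarrow> ('g \<Rightarrow> complex) set" where
  "irr_chars G = {\<chi>. \<exists>n \<rho>. irreducible_rep G n \<rho> \<and>
      \<chi> = (\<lambda>g. if g \<in> carrier G then mat_tr (\<rho> g) else 0)}"

definition nonlinear_char :: "('g, 'b) monoid_scheme \<Rightarrow> ('g \<Rightarrow> complex) \<Rightarrow> bool" where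
  "nonlinear_char G \<chi> \<longleftrightarrow> Re (\<chi> \<one>\<^bsub>G\<^esub>) > 1"

definition char_ker :: "('g, 'b) monoid_scheme \<Rightarrow> ('g \<Rightarrow> complex) \<Rightarrow> 'g set" where
  "char_ker G \<chi> = {g \<in> carrier G. \<chi> g = \<chi> \<one>\<^bsub>G\<^esub>}"

definition waist :: "('g, 'b) monoid_scheme \<Rightarrow> 'g set \<Rightarrow> bool" where
  "waist G W \<longleftrightarrow> W \<lhd> G \<and> (\<forall>N. N \<lhd> G \<longrightarrow> N \<subseteq> W \<or> W \<subseteq> N)"

end

theory Submission
  imports Defs "Jordan_Normal_Form.VS_Connect"
begin


lemma mat_tr_one[simp]: "mat_tr (1\<^sub>m n) = of_nat n"
  unfolding mat_tr_def by simp

lemma mat_tr_smult: "A \<in> carrier_mat n n \<Longrightarrow> mat_tr (c \<cdot>\<^sub>m A) = c * mat_tr A"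
  unfolding mat_tr_def by (auto simp: sum_distrib_left intro!: sum.cong)

lemma smult_mat_vec: "A \<in> carrier_mat n n \<Longrightarrow> v \<in> carrier_vec n \<Longrightarrow>
   (c \<cdot>\<^sub>m A) *\<^sub>v v = c \<cdot>\<^sub>v (A *\<^sub>v v)"
  by (rule eq_vecI) (auto simp: scalar_prod_def sum_distrib_left mult.assoc)

lemma one_mat_entry: "A \<in> carrier_mat 1 1 \<Longrightarrow> B \<in> carrier_mat 1 1 \<Longrightarrow> (A * B) $$ (0,0) = A $$ (0,0) * B $$ (0,0)"
  by (auto simp: scalar_prod_def)

lemma mat_tr_1: "A \<in> carrier_mat 1 1 \<Longrightarrow> mat_tr A = A $$ (0,0)"
  unfolding mat_tr_def by simp

lemma rep_one_entry:
  assumes "group G" "is_rep G 1 \<rho>" "g \<in> carrier G"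
  shows "\<rho> g $$ (0,0) * \<rho> (inv\<^bsub>G\<^esub> g) $$ (0,0) = 1"
proof -
  interpret group G by fact
  have "\<rho> g * \<rho> (inv\<^bsub>G\<^esub> g) = 1\<^sub>m 1" using assms unfolding is_rep_def by (metis inv_closed r_inv)
  then have "(\<rho> g * \<rho> (inv\<^bsub>G\<^esub> g)) $$ (0,0) = 1" by simp
  moreover have "\<rho> g \<in> carrier_mat 1 1" "\<rho> (inv\<^bsub>G\<^esub> g) \<in> carrier_mat 1 1" using assms unfolding is_rep_def by auto
  ultimately show ?thesis using one_mat_entry by metis
qed

lemma lin_ker:
  assumes "group G" "is_rep G 1 \<rho>"
  shows "derived G (carrier G) \<subseteq> {g\<in>carrier G. \<rho> g $$ (0,0) = 1}"
proof -
  interpret group G by fact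
  define K where "K = {g\<in>carrier G. \<rho> g $$ (0,0) = 1}"
  have mul: "\<rho> (g \<otimes>\<^bsub>G\<^esub> h) $$ (0,0) = \<rho> g $$ (0,0) * \<rho> h $$ (0,0)" if "g \<in> carrier G" "h \<in> carrier G" for g h
    using assms that one_mat_entry unfolding is_rep_def by metis
  have sg: "subgroup K G"
  proof
    show "K \<subseteq> carrier G" unfolding K_def by auto
    show "\<one>\<^bsub>G\<^esub> \<in> K" using assms unfolding K_def is_rep_def by auto
    show "x \<otimes>\<^bsub>G\<^esub> y \<in> K" if "x \<in> K" "y \<in> K" for x y using that mul unfolding K_def by auto
    show "inv\<^bsub>G\<^esub> x \<in> K" if "x \<in> K" for x using that rep_one_entry[OF assms, of x] unfolding K_def by auto
  qed
  have "derived_set G (carrier G) \<subseteq> K"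
  proof
    fix z assume "z \<in> derived_set G (carrier G)"
    then obtain g h where gh: "g \<in> carrier G" "h \<in> carrier G"
      "z = g \<otimes>\<^bsub>G\<^esub> h \<otimes>\<^bsub>G\<^esub> inv\<^bsub>G\<^esub> g \<otimes>\<^bsub>G\<^esub> inv\<^bsub>G\<^esub> h" by auto
    have "\<rho> z $$ (0,0) = (\<rho> g $$ (0,0) * \<rho> (inv\<^bsub>G\<^esub> g) $$ (0,0)) * (\<rho> h $$ (0,0) * \<rho> (inv\<^bsub>G\<^esub> h) $$ (0,0))"
      using gh by (simp add: mul mult_ac)
    also have "\<dots> = 1" using rep_one_entry[OF assms] gh by simp
    finally show "z \<in> K" using gh unfolding K_def by auto
  qed
  then show ?thesis unfolding derived_def K_def[symmetric] using generate_subgroup_incl[OF _ sg] by blast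
qed

lemma smult_mult_both: "A \<in> carrier_mat n n \<Longrightarrow> B \<in> carrier_mat n n \<Longrightarrow>
  (a \<cdot>\<^sub>m A) * (b \<cdot>\<^sub>m B) = (a * b :: complex) \<cdot>\<^sub>m (A * B)"
  by (rule eq_matI; auto simp: scalar_prod_def sum_distrib_left ac_simps intro!: sum.cong)

lemma tensor_rep:
  assumes "group G" "is_rep G n \<rho>" "is_rep G 1 lam"
  shows "is_rep G n (\<lambda>g. (lam g $$ (0,0)) \<cdot>\<^sub>m \<rho> g)"
proof -
  interpret group G by fact
  have mul: "lam (g \<otimes>\<^bsub>G\<^esub> h) $$ (0,0) = lam g $$ (0,0) * lam h $$ (0,0)" if "g \<in> carrier G" "h \<in> carrier G" for g h
    using assms that one_mat_entry unfolding is_rep_def by metis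
  have r: "\<rho> g \<in> carrier_mat n n" if "g \<in> carrier G" for g using assms that unfolding is_rep_def by auto
  have rm: "\<rho> (g \<otimes>\<^bsub>G\<^esub> h) = \<rho> g * \<rho> h" if "g \<in> carrier G" "h \<in> carrier G" for g h
    using assms that unfolding is_rep_def by auto
  have l1: "lam \<one>\<^bsub>G\<^esub> $$ (0,0) = 1" using assms(3) unfolding is_rep_def by auto
  show ?thesis using assms(2) unfolding is_rep_def
    by (auto simp: l1 simp: mul rm smult_mult_both[OF r r] simp del: One_nat_def)
qed

lemma tensor_irr:
  assumes "group G" "irreducible_rep G n \<rho>" "is_rep G 1 lam"
  shows "irreducible_rep G n (\<lambda>g. (lam g $$ (0,0)) \<cdot>\<^sub>m \<rho> g)"
proof -
  interpret group G by fact
  have r: "is_rep G n \<rho>" using assms unfolding irreducible_rep_def by auto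
  {
    fix W assume W: "invariant_subspace G n (\<lambda>g. (lam g $$ (0,0)) \<cdot>\<^sub>m \<rho> g) W"
    have "invariant_subspace G n \<rho> W"
      unfolding invariant_subspace_def
    proof (intro conjI ballI allI)
      fix g v assume g: "g \<in> carrier G" and v: "v \<in> W"
      have vc: "v \<in> carrier_vec n" using W v unfolding invariant_subspace_def by auto
      have rc: "\<rho> g \<in> carrier_mat n n" using r g unfolding is_rep_def by auto
      let ?c = "lam g $$ (0,0)"
      have c0: "?c \<noteq> 0" using rep_one_entry[OF assms(1,3) g] by auto
      have "(1 / ?c) \<cdot>\<^sub>v ((?c \<cdot>\<^sub>m \<rho> g) *\<^sub>v v) \<in> W" using W g v unfolding invariant_subspace_def by auto
      also have "(1 / ?c) \<cdot>\<^sub>v ((?c \<cdot>\<^sub>m \<rho> g) *\<^sub>v v) = \<rho> g *\<^sub>v v"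
        using c0 by (simp add: smult_mat_vec[OF rc vc] smult_smult_assoc)
      finally show "\<rho> g *\<^sub>v v \<in> W" .
    qed (use W in \<open>auto simp: invariant_subspace_def\<close>)
  }
  then show ?thesis using assms tensor_rep[OF assms(1) r assms(3)] unfolding irreducible_rep_def by blast
qed

definition chr :: "('g, 'b) monoid_scheme \<Rightarrow> ('g \<Rightarrow> complex mat) \<Rightarrow> 'g \<Rightarrow> complex" where
  "chr G \<rho> = (\<lambda>g. if g \<in> carrier G then mat_tr (\<rho> g) else 0)"

lemma chr_irr: "irreducible_rep G n \<rho> \<Longrightarrow> chr G \<rho> \<in> irr_chars G"
  unfolding irr_chars_def chr_def by blast

lemma chr_one: "group G \<Longrightarrow> is_rep G n \<rho> \<Longrightarrow> chr G \<rho> \<one>\<^bsub>G\<^esub> = of_nat n"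
  unfolding chr_def is_rep_def by (simp add: group.is_monoid monoid.one_closed)

lemma chr_ker: "group G \<Longrightarrow> is_rep G n \<rho> \<Longrightarrow> char_ker G (chr G \<rho>) = {g\<in>carrier G. mat_tr (\<rho> g) = of_nat n}"
  using chr_one[of G n \<rho>] unfolding char_ker_def by (auto simp: chr_def)

lemma chr_nonlin: "group G \<Longrightarrow> is_rep G n \<rho> \<Longrightarrow> nonlinear_char G (chr G \<rho>) \<longleftrightarrow> n > 1"
  using chr_one[of G n \<rho>] unfolding nonlinear_char_def by auto



lemma (in group) regular_rep:
  assumes "finite (carrier G)" "x \<in> carrier G" "x \<noteq> \<one>"
  shows "\<exists>n \<rho>. is_rep G n \<rho> \<and> mat_tr (\<rho> x) \<noteq> of_nat n"
proof -
  obtain hs where hs: "set hs = carrier G" "distinct hs" using finite_distinct_list[OF assms(1)] by blast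
  define n where "n = length hs"
  have mem: "hs ! i \<in> carrier G" if "i < n" for i using that unfolding n_def by (metis hs(1) nth_mem)
  have ex: "\<exists>k<n. hs ! k = a" if "a \<in> carrier G" for a using hs that unfolding n_def by (metis in_set_conv_nth)
  have inj: "hs ! i = hs ! j \<longleftrightarrow> i = j" if "i < n" "j < n" for i j
    using hs that unfolding n_def by (simp add: nth_eq_iff_index_eq)
  define \<rho> where "\<rho> = (\<lambda>g. mat n n (\<lambda>(i,j). if g \<otimes> hs ! j = hs ! i then 1 else (0::complex)))"
  have n0: "n > 0" using hs one_closed unfolding n_def by (metis length_pos_if_in_set)
  have rep: "is_rep G n \<rho>"
    unfolding is_rep_def
  proof (intro conjI ballI)
    show "0 < n" by fact
    show "\<rho> g \<in> carrier_mat n n" for g unfolding \<rho>_def by simp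
    show "\<rho> \<one> = 1\<^sub>m n" unfolding \<rho>_def by (rule eq_matI) (auto simp: mem inj)
    fix g h assume g: "g \<in> carrier G" and h: "h \<in> carrier G"
    show "\<rho> (g \<otimes> h) = \<rho> g * \<rho> h"
    proof (rule eq_matI)
      fix i j assume i: "i < dim_row (\<rho> g * \<rho> h)" and j: "j < dim_col (\<rho> g * \<rho> h)"
      then have i: "i < n" and j: "j < n" unfolding \<rho>_def by simp_all
      obtain k0 where k0: "k0 < n" "hs ! k0 = h \<otimes> hs ! j" using ex[OF m_closed[OF h mem[OF j]]] by blast
      have "(\<rho> g * \<rho> h) $$ (i,j) = (\<Sum>k<n. (if g \<otimes> hs ! k = hs ! i then 1 else 0) * (if h \<otimes> hs ! j = hs ! k then 1 else (0::complex)))"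
        using i j unfolding \<rho>_def by (auto simp: scalar_prod_def atLeast0LessThan intro!: sum.cong)
      also have "\<dots> = (\<Sum>k<n. if k = k0 then (if g \<otimes> hs ! k0 = hs ! i then 1 else 0) else 0)"
        using k0 inj by (intro sum.cong) auto
      also have "\<dots> = (if g \<otimes> hs ! k0 = hs ! i then 1 else 0)" using k0 by simp
      also have "\<dots> = \<rho> (g \<otimes> h) $$ (i,j)" using i j k0 g h mem[OF j] unfolding \<rho>_def by (simp add: m_assoc)
      finally show "\<rho> (g \<otimes> h) $$ (i,j) = (\<rho> g * \<rho> h) $$ (i,j)" by simp
    qed (auto simp: \<rho>_def)
  qed
  have "mat_tr (\<rho> x) = (\<Sum>i<n. 0)"
    unfolding mat_tr_def \<rho>_def using assms(2,3) mem
    by (auto intro!: sum.cong simp: r_cancel_one')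
  then have "mat_tr (\<rho> x) \<noteq> of_nat n" using n0 by simp
  then show ?thesis using rep by blast
qed

lemma rep_hom:
  assumes "group G" "group H" "f \<in> hom G H" "is_rep H n \<rho>"
  shows "is_rep G n (\<lambda>g. \<rho> (f g))"
proof -
  have f1: "f \<one>\<^bsub>G\<^esub> = \<one>\<^bsub>H\<^esub>" using hom_one[OF assms(3) assms(1,2)] .
  have fc: "f g \<in> carrier H" if "g \<in> carrier G" for g using assms(3) that unfolding hom_def by auto
  have fm: "f (g \<otimes>\<^bsub>G\<^esub> h) = f g \<otimes>\<^bsub>H\<^esub> f h" if "g \<in> carrier G" "h \<in> carrier G" for g h
    using assms(3) that unfolding hom_def by auto
  show ?thesis using assms(4) unfolding is_rep_def by (simp add: f1 fc fm)
qed

lemma quot_rep: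
  assumes "group G" "finite (carrier G)" "M \<lhd> G" "x \<in> carrier G" "x \<notin> M"
  shows "\<exists>n \<rho>. is_rep G n \<rho> \<and> (\<forall>m\<in>M. \<rho> m = 1\<^sub>m n) \<and> mat_tr (\<rho> x) \<noteq> of_nat n"
proof -
  interpret normal M G by fact
  have grp: "group (G Mod M)" by (rule factorgroup_is_group)
  have fin: "finite (carrier (G Mod M))" using assms(2) unfolding carrier_FactGroup by simp
  have xc: "M #>\<^bsub>G\<^esub> x \<in> carrier (G Mod M)" using assms(4) unfolding carrier_FactGroup by auto
  have "M #>\<^bsub>G\<^esub> x \<noteq> M"
    using group.rcos_self[OF assms(1) assms(4) subgroup_axioms] assms(5) by auto
  then have "M #>\<^bsub>G\<^esub> x \<noteq> \<one>\<^bsub>G Mod M\<^esub>" by simp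
  then obtain n \<rho> where r: "is_rep (G Mod M) n \<rho>" "mat_tr (\<rho> (M #>\<^bsub>G\<^esub> x)) \<noteq> of_nat n"
    using group.regular_rep[OF grp fin xc] by blast
  have r2: "is_rep G n (\<lambda>g. \<rho> (M #>\<^bsub>G\<^esub> g))" by (rule rep_hom[OF assms(1) grp r_coset_hom_Mod r(1)])
  have "\<rho> (M #>\<^bsub>G\<^esub> m) = 1\<^sub>m n" if "m \<in> M" for m
    using rcos_const[OF assms(1) that] r(1) unfolding is_rep_def by simp
  then show ?thesis using r2 r(2) by blast
qed

lemma sum_split_nat: fixes f :: "nat \<Rightarrow> 'a::comm_monoid_add" and d n :: nat
  shows "d \<le> n \<Longrightarrow> (\<Sum>i<n. f i) = (\<Sum>i<d. f i) + (\<Sum>i<n-d. f (i+d))"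
proof (induction n rule: dec_induct)
  case base then show ?case by simp
next
  case (step m)
  then have "Suc m - d = Suc (m - d)" by simp
  then show ?case using step by (simp add: add.assoc)
qed

lemma mat_tr_comm: "mat_tr (A * B) = mat_tr (B * A)" if "A \<in> carrier_mat n m" "B \<in> carrier_mat m n" for A B :: "complex mat"
proof -
  have "mat_tr (A * B) = (\<Sum>i<n. \<Sum>k<m. A $$ (i,k) * B $$ (k,i))"
    using that unfolding mat_tr_def
    by (intro sum.cong) (auto simp: atLeast0LessThan scalar_prod_def)
  also have "\<dots> = (\<Sum>k<m. \<Sum>i<n. B $$ (k,i) * A $$ (i,k))"
    by (subst sum.swap) (simp add: mult.commute)
  also have "\<dots> = mat_tr (B * A)"
    using that unfolding mat_tr_def
    by (intro sum.cong) (auto simp: atLeast0LessThan scalar_prod_def)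
  finally show ?thesis .
qed
lemma mult_entry: "A \<in> carrier_mat n n \<Longrightarrow> B \<in> carrier_mat n n \<Longrightarrow> i < n \<Longrightarrow> j < n \<Longrightarrow>
  (A * B) $$ (i,j) = (\<Sum>k<n. A $$ (i,k) * B $$ (k,j))"
  by (simp add: scalar_prod_def atLeast0LessThan)

lemma block_rep:
  assumes "group G" "is_rep G n B" "0 < d" "d < n"
    and Z: "\<forall>g\<in>carrier G. \<forall>i j. d \<le> i \<longrightarrow> i < n \<longrightarrow> j < d \<longrightarrow> B g $$ (i,j) = 0"
  defines "BA \<equiv> \<lambda>g. mat d d (\<lambda>(i,j). B g $$ (i,j))"
    and "BC \<equiv> \<lambda>g. mat (n-d) (n-d) (\<lambda>(i,j). B g $$ (i+d,j+d))"
  shows "is_rep G d BA" "is_rep G (n-d) BC"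
    "\<forall>g\<in>carrier G. mat_tr (B g) = mat_tr (BA g) + mat_tr (BC g)"
    "\<forall>g\<in>carrier G. B g = 1\<^sub>m n \<longrightarrow> BA g = 1\<^sub>m d \<and> BC g = 1\<^sub>m (n-d)"
proof -
  have Bc: "B g \<in> carrier_mat n n" if "g \<in> carrier G" for g using assms(2) that unfolding is_rep_def by auto
  have Bm: "B (g \<otimes>\<^bsub>G\<^esub> h) = B g * B h" if "g \<in> carrier G" "h \<in> carrier G" for g h
    using assms(2) that unfolding is_rep_def by auto
  have B1: "B \<one>\<^bsub>G\<^esub> = 1\<^sub>m n" using assms(2) unfolding is_rep_def by auto
  have dn: "d \<le> n" using assms(4) by simp
  show "is_rep G d BA" unfolding is_rep_def
  proof (intro conjI ballI)
    show "0 < d" by fact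
    show "BA g \<in> carrier_mat d d" for g unfolding BA_def by simp
    show "BA \<one>\<^bsub>G\<^esub> = 1\<^sub>m d" unfolding BA_def B1 by (rule eq_matI) (use assms(4) in auto)
    fix g h assume g: "g \<in> carrier G" and h: "h \<in> carrier G"
    show "BA (g \<otimes>\<^bsub>G\<^esub> h) = BA g * BA h"
    proof (rule eq_matI)
      fix i j assume "i < dim_row (BA g * BA h)" "j < dim_col (BA g * BA h)"
      then have i: "i < d" and j: "j < d" unfolding BA_def by simp_all
      have "BA (g \<otimes>\<^bsub>G\<^esub> h) $$ (i,j) = (B g * B h) $$ (i,j)" using i j unfolding BA_def Bm[OF g h] by simp
      also have "\<dots> = (\<Sum>k<n. B g $$ (i,k) * B h $$ (k,j))" using mult_entry[OF Bc[OF g] Bc[OF h]] i j assms(4) by simp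
      also have "\<dots> = (\<Sum>k<d. B g $$ (i,k) * B h $$ (k,j)) + (\<Sum>k<n-d. B g $$ (i,k+d) * B h $$ (k+d,j))"
        by (rule sum_split_nat[OF dn])
      also have "(\<Sum>k<n-d. B g $$ (i,k+d) * B h $$ (k+d,j)) = 0"
        using Z h j by (intro sum.neutral) auto
      also have "(\<Sum>k<d. B g $$ (i,k) * B h $$ (k,j)) = (BA g * BA h) $$ (i,j)"
        using i j unfolding BA_def by (simp add: scalar_prod_def atLeast0LessThan)
      finally show "BA (g \<otimes>\<^bsub>G\<^esub> h) $$ (i,j) = (BA g * BA h) $$ (i,j)" by simp
    qed (simp_all add: BA_def)
  qed
  show "is_rep G (n-d) BC" unfolding is_rep_def
  proof (intro conjI ballI)
    show "0 < n - d" using assms(4) by simp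
    show "BC g \<in> carrier_mat (n-d) (n-d)" for g unfolding BC_def by simp
    show "BC \<one>\<^bsub>G\<^esub> = 1\<^sub>m (n-d)" unfolding BC_def B1 by (rule eq_matI) auto
    fix g h assume g: "g \<in> carrier G" and h: "h \<in> carrier G"
    show "BC (g \<otimes>\<^bsub>G\<^esub> h) = BC g * BC h"
    proof (rule eq_matI)
      fix i j assume "i < dim_row (BC g * BC h)" "j < dim_col (BC g * BC h)"
      then have i: "i < n - d" and j: "j < n - d" unfolding BC_def by simp_all
      have "BC (g \<otimes>\<^bsub>G\<^esub> h) $$ (i,j) = (B g * B h) $$ (i+d,j+d)" using i j unfolding BC_def Bm[OF g h] by simp
      also have "\<dots> = (\<Sum>k<n. B g $$ (i+d,k) * B h $$ (k,j+d))" using mult_entry[OF Bc[OF g] Bc[OF h]] i j by simp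
      also have "\<dots> = (\<Sum>k<d. B g $$ (i+d,k) * B h $$ (k,j+d)) + (\<Sum>k<n-d. B g $$ (i+d,k+d) * B h $$ (k+d,j+d))"
        by (rule sum_split_nat[OF dn])
      also have "(\<Sum>k<d. B g $$ (i+d,k) * B h $$ (k,j+d)) = 0"
        using Z g i by (intro sum.neutral) auto
      also have "(\<Sum>k<n-d. B g $$ (i+d,k+d) * B h $$ (k+d,j+d)) = (BC g * BC h) $$ (i,j)"
        using i j unfolding BC_def by (simp add: scalar_prod_def atLeast0LessThan)
      finally show "BC (g \<otimes>\<^bsub>G\<^esub> h) $$ (i,j) = (BC g * BC h) $$ (i,j)" by simp
    qed (simp_all add: BC_def)
  qed
  show "\<forall>g\<in>carrier G. mat_tr (B g) = mat_tr (BA g) + mat_tr (BC g)"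
  proof
    fix g assume g: "g \<in> carrier G"
    have "mat_tr (B g) = (\<Sum>i<n. B g $$ (i,i))" using Bc[OF g] unfolding mat_tr_def by simp
    also have "\<dots> = (\<Sum>i<d. B g $$ (i,i)) + (\<Sum>i<n-d. B g $$ (i+d,i+d))" by (rule sum_split_nat[OF dn])
    also have "\<dots> = mat_tr (BA g) + mat_tr (BC g)" unfolding mat_tr_def BA_def BC_def by simp
    finally show "mat_tr (B g) = mat_tr (BA g) + mat_tr (BC g)" .
  qed
  show "\<forall>g\<in>carrier G. B g = 1\<^sub>m n \<longrightarrow> BA g = 1\<^sub>m d \<and> BC g = 1\<^sub>m (n-d)"
    unfolding BA_def BC_def using assms(4) by (auto intro!: eq_matI)
qed



context vec_space begin

lemma li_extend:
  assumes "A \<subseteq> S" "S \<subseteq> carrier_vec n" "lin_indpt A"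
  shows "\<exists>B. A \<subseteq> B \<and> B \<subseteq> S \<and> lin_indpt B \<and> finite B \<and> S \<subseteq> span B"
proof -
  let ?P = "\<lambda>B. A \<subseteq> B \<and> B \<subseteq> S \<and> lin_indpt B"
  have bnd: "card B < Suc n" if "?P B" for B
  proof -
    have "B \<subseteq> carrier_vec n" using that assms(2) by blast
    then show ?thesis using li_le_dim(2)[OF fin_dim, of B] that dim_is_n by simp
  qed
  obtain B where B: "?P B" "\<forall>C. ?P C \<longrightarrow> card C \<le> card B"
    using ex_has_greatest_nat[of ?P A card "Suc n"] assms bnd by blast
  have Bc: "B \<subseteq> carrier_vec n" using B assms(2) by auto
  have fB: "finite B" using li_le_dim(1)[OF fin_dim Bc] B by auto
  have "S \<subseteq> span B"
  proof
    fix v assume v: "v \<in> S"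
    show "v \<in> span B"
    proof (rule ccontr)
      assume nv: "v \<notin> span B"
      have vB: "v \<notin> B" using nv in_own_span[OF Bc] by auto
      have vc: "v \<in> carrier_vec n" using v assms(2) by auto
      have "lin_indpt (B \<union> {v})" using lin_dep_iff_in_span[of B v] Bc B vc vB nv by auto
      then have "?P (B \<union> {v})" using B v by auto
      then have "card (B \<union> {v}) \<le> card B" using B by blast
      then show False using fB vB by simp
    qed
  qed
  then show ?thesis using B fB by blast
qed

lemma span_repr:
  assumes "set xs \<subseteq> carrier_vec n" "v \<in> span (set xs)"
  shows "\<exists>c. v = mat_of_cols n xs *\<^sub>v vec (length xs) c"
proof -
  have "v \<in> span_list xs" using span_list_as_span[OF assms(1)] assms(2) by simp
  then obtain c where "v = lincomb_list c xs" by (auto elim: in_span_listE)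
  moreover have "lincomb_list c xs = mat_of_cols n xs *\<^sub>v vec (length xs) c"
    using assms(1) by (intro lincomb_list_as_mat_mult) auto
  ultimately show ?thesis by auto
qed

lemma triang:
  fixes W :: "'a vec set"
  assumes Wc: "W \<subseteq> carrier_vec n" and W0: "0\<^sub>v n \<in> W" and Wadd: "\<forall>v\<in>W. \<forall>w\<in>W. v + w \<in> W"
    and Wsm: "\<forall>c. \<forall>v\<in>W. c \<cdot>\<^sub>v v \<in> W" and Wne: "W \<noteq> {0\<^sub>v n}" and Wnf: "W \<noteq> carrier_vec n"
  shows "\<exists>d P Q. 0 < d \<and> d < n \<and> P \<in> carrier_mat n n \<and> Q \<in> carrier_mat n n \<and> Q * P = 1\<^sub>m n \<and> P * Q = 1\<^sub>m n \<and>
     (\<forall>T \<in> carrier_mat n n. (\<forall>v\<in>W. T *\<^sub>v v \<in> W) \<longrightarrow>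
        (\<forall>i j. d \<le> i \<longrightarrow> i < n \<longrightarrow> j < d \<longrightarrow> (Q * T * P) $$ (i,j) = 0))"
proof -
  have sub: "submodule class_ring W V"
    unfolding submodule_def using Wc W0 Wadd Wsm vec_module by auto
  have li0: "lin_indpt {}" by (auto simp: lin_dep_def)
  obtain A where A: "A \<subseteq> W" "lin_indpt A" "finite A" "W \<subseteq> span A"
    using li_extend[of "{}" W] li0 Wc by auto
  have spanA: "span A = W" using A span_is_subset[OF A(1) sub] by auto
  have Ac: "A \<subseteq> carrier_vec n" using A Wc by auto
  obtain B where B: "A \<subseteq> B" "B \<subseteq> carrier_vec n" "lin_indpt B" "finite B" "carrier_vec n \<subseteq> span B"
    using li_extend[of A "carrier_vec n"] Ac A(2) by auto
  have spanB: "span B = carrier_vec n" using B span_is_subset2[OF B(2)] by auto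
  have "basis B" unfolding basis_def using B spanB by auto
  then have cardB: "card B = n" using dim_basis[OF B(4)] dim_is_n by simp
  define d where "d = card A"
  have "A \<noteq> {}"
  proof
    assume "A = {}"
    then have "W = {0\<^sub>v n}" using spanA span_empty by simp
    then show False using Wne by simp
  qed
  then have d0: "0 < d" unfolding d_def using A(3) by (simp add: card_gt_0_iff)
  have dle: "d \<le> n" unfolding d_def using card_mono[OF B(4) B(1)] cardB by simp
  have "d \<noteq> n"
  proof
    assume "d = n"
    then have "A = B" using card_subset_eq[OF B(4) B(1)] cardB unfolding d_def by simp
    then show False using spanA spanB Wnf by simp
  qed
  then have dn: "d < n" using dle by simp
  obtain us where us: "set us = A" "distinct us" using finite_distinct_list[OF A(3)] by blast
  obtain zs where zs: "set zs = B - A" "distinct zs" using finite_distinct_list[of "B - A"] B(4) by blast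
  define bs where "bs = us @ zs"
  have bs: "set bs = B" "distinct bs" unfolding bs_def using us zs B(1) by auto
  have lbs: "length bs = n" using distinct_card[OF bs(2)] bs(1) cardB by simp
  have las: "length us = d" using distinct_card[OF us(2)] us(1) unfolding d_def by simp
  have bsc: "set bs \<subseteq> carrier_vec n" using bs B(2) by simp
  have asc: "set us \<subseteq> carrier_vec n" using us Ac by simp
  define P where "P = mat_of_cols n bs"
  have Pc: "P \<in> carrier_mat n n" unfolding P_def using mat_of_cols_carrier(1)[of n bs] lbs by simp
  have "\<forall>j\<in>{..<n}. \<exists>c. unit_vec n j = P *\<^sub>v vec n c"
  proof
    fix j assume j: "j \<in> {..<n}"
    have "unit_vec n j \<in> span (set bs)" using spanB bs(1) j by auto
    then show "\<exists>c. unit_vec n j = P *\<^sub>v vec n c" using span_repr[OF bsc] lbs unfolding P_def by simp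
  qed
  then obtain cf where cf: "\<And>j. j < n \<Longrightarrow> unit_vec n j = P *\<^sub>v vec n (cf j)" by (metis lessThan_iff)
  define Q where "Q = mat n n (\<lambda>(i,j). cf j i)"
  have Qc: "Q \<in> carrier_mat n n" unfolding Q_def by simp
  have PQ: "P * Q = 1\<^sub>m n"
  proof (rule eq_matI)
    fix i j assume "i < dim_row (1\<^sub>m n)" "j < dim_col (1\<^sub>m n)"
    then have i: "i < n" and j: "j < n" by simp_all
    have "(P * Q) $$ (i,j) = row P i \<bullet> col Q j" using i j Pc Qc by simp
    also have "col Q j = vec n (cf j)" unfolding Q_def using j by simp
    also have "row P i \<bullet> vec n (cf j) = (P *\<^sub>v vec n (cf j)) $ i" using i Pc by simp
    also have "\<dots> = unit_vec n j $ i" using cf[OF j] by simp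
    finally show "(P * Q) $$ (i,j) = 1\<^sub>m n $$ (i,j)" using i j by simp
  qed (use Pc Qc in auto)
  have QP: "Q * P = 1\<^sub>m n" using mat_mult_left_right_inverse[OF Pc Qc PQ] .
  have tri: "(Q * T * P) $$ (i,j) = 0"
    if T: "T \<in> carrier_mat n n" "\<forall>v\<in>W. T *\<^sub>v v \<in> W" and ij: "d \<le> i" "i < n" "j < d" for T i j
  proof -
    have jas: "j < length us" using ij las by simp
    have colj: "col P j = us ! j" unfolding P_def bs_def using jas asc
      by (subst col_mat_of_cols) (auto simp: nth_append)
    have "us ! j \<in> W" using us A(1) jas by auto
    then have "T *\<^sub>v (us ! j) \<in> span (set us)" using T spanA us by auto
    then obtain c where c: "T *\<^sub>v (us ! j) = mat_of_cols n us *\<^sub>v vec d c"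
      using span_repr[OF asc] las by auto
    define c' where "c' = vec n (\<lambda>k. if k < d then c k else 0)"
    have Pc': "P *\<^sub>v c' = mat_of_cols n us *\<^sub>v vec d c"
    proof (rule eq_vecI)
      fix k assume "k < dim_vec (mat_of_cols n us *\<^sub>v vec d c)"
      then have k: "k < n" by simp
      have "(P *\<^sub>v c') $ k = (\<Sum>l<n. P $$ (k,l) * c' $ l)"
        using k Pc unfolding c'_def by (simp add: scalar_prod_def atLeast0LessThan)
      also have "\<dots> = (\<Sum>l<d. P $$ (k,l) * c' $ l) + (\<Sum>l<n-d. P $$ (k,l+d) * c' $ (l+d))"
        by (rule sum_split_nat[OF dle])
      also have "(\<Sum>l<n-d. P $$ (k,l+d) * c' $ (l+d)) = 0" unfolding c'_def by (intro sum.neutral) auto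
      also have "(\<Sum>l<d. P $$ (k,l) * c' $ l) = (\<Sum>l<d. mat_of_cols n us $$ (k,l) * vec d c $ l)"
        unfolding c'_def P_def bs_def using k dn las
        by (intro sum.cong) (auto simp: mat_of_cols_index nth_append)
      also have "\<dots> = (mat_of_cols n us *\<^sub>v vec d c) $ k"
        using k las by (simp add: scalar_prod_def atLeast0LessThan)
      finally show "(P *\<^sub>v c') $ k = (mat_of_cols n us *\<^sub>v vec d c) $ k" by simp
    qed (use Pc las in simp)
    have cc: "c' \<in> carrier_vec n" unfolding c'_def by simp
    have colc: "col P j \<in> carrier_vec n" using Pc unfolding carrier_vec_def by simp
    have QT: "Q * T \<in> carrier_mat n n" using Qc T(1) by simp
    have e1: "(Q * T * P) $$ (i,j) = row (Q * T) i \<bullet> col P j"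
      using Pc QT ij dn by (intro index_mult_mat(1)) auto
    have e2: "((Q * T) *\<^sub>v col P j) $ i = row (Q * T) i \<bullet> col P j"
      using QT ij by (intro index_mult_mat_vec) auto
    have "(Q * T * P) $$ (i,j) = ((Q * T) *\<^sub>v col P j) $ i" using e1 e2 by simp
    also have "(Q * T) *\<^sub>v col P j = Q *\<^sub>v (T *\<^sub>v col P j)" using assoc_mult_mat_vec[OF Qc T(1) colc] .
    also have "T *\<^sub>v col P j = P *\<^sub>v c'" using colj c Pc' by simp
    also have "Q *\<^sub>v (P *\<^sub>v c') = (Q * P) *\<^sub>v c'" using Qc Pc cc by simp
    also have "\<dots> = c'" using QP cc by simp
    finally show ?thesis using ij unfolding c'_def by simp
  qed
  show ?thesis using d0 dn Pc Qc QP PQ tri by blast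
qed

end

lemma split_rep:
  assumes "group G" "is_rep G n \<rho>" "invariant_subspace G n \<rho> W" "W \<noteq> {0\<^sub>v n}" "W \<noteq> carrier_vec n"
  shows "\<exists>d \<rho>A \<rho>C. 0 < d \<and> d < n \<and> is_rep G d \<rho>A \<and> is_rep G (n-d) \<rho>C \<and>
     (\<forall>g\<in>carrier G. mat_tr (\<rho> g) = mat_tr (\<rho>A g) + mat_tr (\<rho>C g)) \<and>
     (\<forall>g\<in>carrier G. \<rho> g = 1\<^sub>m n \<longrightarrow> \<rho>A g = 1\<^sub>m d \<and> \<rho>C g = 1\<^sub>m (n-d))"
proof -
  interpret vec_space "TYPE(complex)" n .
  have Wi: "W \<subseteq> carrier_vec n" "0\<^sub>v n \<in> W" "\<forall>v\<in>W. \<forall>w\<in>W. v + w \<in> W" "\<forall>c. \<forall>v\<in>W. c \<cdot>\<^sub>v v \<in> W"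
    "\<forall>g\<in>carrier G. \<forall>v\<in>W. \<rho> g *\<^sub>v v \<in> W"
    using assms(3) unfolding invariant_subspace_def by auto
  obtain d P Q where dPQ: "0 < d" "d < n" "P \<in> carrier_mat n n" "Q \<in> carrier_mat n n" "Q * P = 1\<^sub>m n" "P * Q = 1\<^sub>m n"
    "\<forall>T \<in> carrier_mat n n. (\<forall>v\<in>W. T *\<^sub>v v \<in> W) \<longrightarrow>
        (\<forall>i j. d \<le> i \<longrightarrow> i < n \<longrightarrow> j < d \<longrightarrow> (Q * T * P) $$ (i,j) = 0)"
    using triang[OF Wi(1-4) assms(4,5)] by blast
  have rc: "\<rho> g \<in> carrier_mat n n" if "g \<in> carrier G" for g using assms(2) that unfolding is_rep_def by auto
  define B where "B = (\<lambda>g. Q * \<rho> g * P)"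
  have Bc: "B g \<in> carrier_mat n n" if "g \<in> carrier G" for g unfolding B_def using rc[OF that] dPQ(3,4) by simp
  have PQX: "P * (Q * X) = X" if "X \<in> carrier_mat n n" for X
  proof -
    have "P * (Q * X) = (P * Q) * X" using dPQ(3,4) that by simp
    then show ?thesis using dPQ(6) that by simp
  qed
  have repB: "is_rep G n B" unfolding is_rep_def
  proof (intro conjI ballI)
    show "0 < n" using assms(2) unfolding is_rep_def by simp
    show "B g \<in> carrier_mat n n" if "g \<in> carrier G" for g using Bc that .
    show "B \<one>\<^bsub>G\<^esub> = 1\<^sub>m n" unfolding B_def using assms(2) dPQ(3,4,5) unfolding is_rep_def by simp
    fix g h assume g: "g \<in> carrier G" and h: "h \<in> carrier G"
    have "B g * B h = Q * (\<rho> g * (P * (Q * (\<rho> h * P))))"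
      unfolding B_def using rc[OF g] rc[OF h] dPQ(3,4) by (simp add: assoc_mult_mat[of _ n n _ n _ n])
    also have "P * (Q * (\<rho> h * P)) = \<rho> h * P" using PQX rc[OF h] dPQ(3) by simp
    also have "Q * (\<rho> g * (\<rho> h * P)) = B (g \<otimes>\<^bsub>G\<^esub> h)"
    proof -
      have "\<rho> (g \<otimes>\<^bsub>G\<^esub> h) = \<rho> g * \<rho> h" using assms(2) g h unfolding is_rep_def by auto
      then show ?thesis unfolding B_def using rc[OF g] rc[OF h] dPQ(3,4) by (simp add: assoc_mult_mat[of _ n n _ n _ n])
    qed
    finally show "B (g \<otimes>\<^bsub>G\<^esub> h) = B g * B h" by simp
  qed
  have Z: "\<forall>g\<in>carrier G. \<forall>i j. d \<le> i \<longrightarrow> i < n \<longrightarrow> j < d \<longrightarrow> B g $$ (i,j) = 0"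
  proof (intro ballI allI impI)
    fix g i j assume g: "g \<in> carrier G" and ij: "d \<le> i" "i < n" "j < d"
    have "\<forall>v\<in>W. \<rho> g *\<^sub>v v \<in> W" using Wi(5) g by blast
    then show "B g $$ (i,j) = 0" unfolding B_def using dPQ(7) rc[OF g] ij by blast
  qed
  have trB: "mat_tr (B g) = mat_tr (\<rho> g)" if "g \<in> carrier G" for g
  proof -
    have QR: "Q * \<rho> g \<in> carrier_mat n n" using rc[OF that] dPQ(4) by simp
    have "mat_tr (B g) = mat_tr (P * (Q * \<rho> g))" unfolding B_def using mat_tr_comm[OF QR dPQ(3)] .
    also have "P * (Q * \<rho> g) = \<rho> g" using PQX rc[OF that] by simp
    finally show ?thesis .
  qed
  have B1: "B g = 1\<^sub>m n" if "g \<in> carrier G" "\<rho> g = 1\<^sub>m n" for g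
    unfolding B_def using that dPQ(3,4,5) by simp
  define BA where "BA = (\<lambda>g. mat d d (\<lambda>(i,j). B g $$ (i,j)))"
  define BC where "BC = (\<lambda>g. mat (n-d) (n-d) (\<lambda>(i,j). B g $$ (i+d,j+d)))"
  have bl: "is_rep G d BA" "is_rep G (n-d) BC"
    "\<forall>g\<in>carrier G. mat_tr (B g) = mat_tr (BA g) + mat_tr (BC g)"
    "\<forall>g\<in>carrier G. B g = 1\<^sub>m n \<longrightarrow> BA g = 1\<^sub>m d \<and> BC g = 1\<^sub>m (n-d)"
    unfolding BA_def BC_def by (rule block_rep[OF assms(1) repB dPQ(1,2) Z])+
  have t: "\<forall>g\<in>carrier G. mat_tr (\<rho> g) = mat_tr (BA g) + mat_tr (BC g)" using bl(3) trB by simp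
  have o: "\<forall>g\<in>carrier G. \<rho> g = 1\<^sub>m n \<longrightarrow> BA g = 1\<^sub>m d \<and> BC g = 1\<^sub>m (n-d)" using bl(4) B1 by simp
  show ?thesis using bl(1,2) dPQ(1,2) t o by blast
qed

lemma irr_exists:
  assumes "group G" "M \<subseteq> carrier G"
  shows "is_rep G n \<rho> \<Longrightarrow> (\<forall>m\<in>M. \<rho> m = 1\<^sub>m n) \<Longrightarrow> x \<in> carrier G \<Longrightarrow> mat_tr (\<rho> x) \<noteq> of_nat n \<Longrightarrow>
    \<exists>n' \<rho>'. irreducible_rep G n' \<rho>' \<and> (\<forall>m\<in>M. \<rho>' m = 1\<^sub>m n') \<and> mat_tr (\<rho>' x) \<noteq> of_nat n'"
proof (induction n arbitrary: \<rho> rule: less_induct)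
  case (less n)
  show ?case
  proof (cases "irreducible_rep G n \<rho>")
    case True
    then show ?thesis using less.prems by blast
  next
    case False
    then obtain W where W: "invariant_subspace G n \<rho> W" "W \<noteq> {0\<^sub>v n}" "W \<noteq> carrier_vec n"
      using less.prems(1) unfolding irreducible_rep_def by blast
    obtain d \<rho>A \<rho>C where s: "0 < d" "d < n" "is_rep G d \<rho>A" "is_rep G (n-d) \<rho>C"
      "\<forall>g\<in>carrier G. mat_tr (\<rho> g) = mat_tr (\<rho>A g) + mat_tr (\<rho>C g)"
      "\<forall>g\<in>carrier G. \<rho> g = 1\<^sub>m n \<longrightarrow> \<rho>A g = 1\<^sub>m d \<and> \<rho>C g = 1\<^sub>m (n-d)"
      using split_rep[OF assms(1) less.prems(1) W] by blast
    have Mc: "m \<in> carrier G" if "m \<in> M" for m using assms(2) that by auto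
    show ?thesis
    proof (cases "mat_tr (\<rho>A x) = of_nat d")
      case True
      then have "mat_tr (\<rho>C x) \<noteq> of_nat (n - d)"
        using s(5) less.prems(3,4) s(2) by (auto simp: of_nat_diff)
      then show ?thesis using less.IH[of "n-d" \<rho>C] s less.prems(2,3) Mc by auto
    next
      case False
      then show ?thesis using less.IH[of d \<rho>A] s less.prems(2,3) Mc by auto
    qed
  qed
qed

lemma separation:
  assumes "group G" "finite (carrier G)" "M \<lhd> G" "x \<in> carrier G" "x \<notin> M"
  shows "\<exists>n \<rho>. irreducible_rep G n \<rho> \<and> (\<forall>m\<in>M. \<rho> m = 1\<^sub>m n) \<and> mat_tr (\<rho> x) \<noteq> of_nat n"
proof -
  have "M \<subseteq> carrier G" using assms(3) by (auto dest: normal_imp_subgroup subgroup.subset)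
  then show ?thesis using quot_rep[OF assms] irr_exists[OF assms(1) _ _ _ assms(4)] by blast
qed

theorem mainTheorem15:
  fixes G :: "('g, 'b) monoid_scheme" and M :: "'g set"
  assumes "group G" and "finite (carrier G)" and "\<not> comm_group G"
    and "\<forall>\<chi>\<in>irr_chars G. \<forall>\<psi>\<in>irr_chars G. nonlinear_char G \<chi> \<and> nonlinear_char G \<psi> \<longrightarrow>
           char_ker G \<chi> \<subseteq> char_ker G \<psi> \<or> char_ker G \<psi> \<subseteq> char_ker G \<chi>"
    and "M \<lhd> G" and "M \<subset> derived G (carrier G)"
  shows "waist G M"
proof -
  interpret group G by fact
  define K where "K = (\<lambda>n \<rho>. {g\<in>carrier G. mat_tr (\<rho> g) = (of_nat n :: complex)})"
  have comp: "K n \<rho> \<subseteq> K m \<sigma> \<or> K m \<sigma> \<subseteq> K n \<rho>"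
    if "irreducible_rep G n \<rho>" "irreducible_rep G m \<sigma>" "n > 1" "m > 1" for n m \<rho> \<sigma>
  proof -
    have r: "is_rep G n \<rho>" "is_rep G m \<sigma>" using that unfolding irreducible_rep_def by auto
    have "nonlinear_char G (chr G \<rho>)" "nonlinear_char G (chr G \<sigma>)"
      using chr_nonlin[OF assms(1) r(1)] chr_nonlin[OF assms(1) r(2)] that(3,4) by auto
    then have "char_ker G (chr G \<rho>) \<subseteq> char_ker G (chr G \<sigma>) \<or> char_ker G (chr G \<sigma>) \<subseteq> char_ker G (chr G \<rho>)"
      using assms(4) chr_irr[OF that(1)] chr_irr[OF that(2)] by blast
    then show ?thesis unfolding K_def chr_ker[OF assms(1) r(1)] chr_ker[OF assms(1) r(2)] .
  qed
  have lin: "derived G (carrier G) \<subseteq> K 1 \<rho>" if "is_rep G 1 \<rho>" for \<rho>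
  proof -
    have "mat_tr (\<rho> g) = \<rho> g $$ (0,0)" if "g \<in> carrier G" for g
      using mat_tr_1[of "\<rho> g"] \<open>is_rep G 1 \<rho>\<close> that unfolding is_rep_def by auto
    then show ?thesis using lin_ker[OF assms(1) that] unfolding K_def by auto
  qed
  have Msub: "M \<subseteq> K n \<rho>" if "is_rep G n \<rho>" "\<forall>m\<in>M. \<rho> m = 1\<^sub>m n" for n \<rho>
    using that assms(5) unfolding K_def by (auto dest: normal_imp_subgroup subgroup.mem_carrier)
  have Dc: "derived G (carrier G) \<subseteq> carrier G" by (simp add: derived_in_carrier)
  have "\<forall>N. N \<lhd> G \<longrightarrow> N \<subseteq> M \<or> M \<subseteq> N"
  proof (intro allI impI)
    fix N assume N: "N \<lhd> G"
    show "N \<subseteq> M \<or> M \<subseteq> N"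
    proof (rule ccontr)
      assume "\<not> (N \<subseteq> M \<or> M \<subseteq> N)"
      then obtain x y where x: "x \<in> N" "x \<notin> M" and y: "y \<in> M" "y \<notin> N" by auto
      obtain z where z: "z \<in> derived G (carrier G)" "z \<notin> M" using assms(6) by auto
      have Nc: "N \<subseteq> carrier G" using N by (auto dest: normal_imp_subgroup subgroup.subset)
      have Mc: "M \<subseteq> carrier G" using assms(5) by (auto dest: normal_imp_subgroup subgroup.subset)
      obtain n1 \<rho>1 where s1: "irreducible_rep G n1 \<rho>1" "\<forall>m\<in>M. \<rho>1 m = 1\<^sub>m n1" "mat_tr (\<rho>1 x) \<noteq> of_nat n1"
        using separation[OF assms(1,2,5) _ x(2)] x(1) Nc by blast
      obtain n2 \<rho>2 where s2: "irreducible_rep G n2 \<rho>2" "\<forall>m\<in>N. \<rho>2 m = 1\<^sub>m n2" "mat_tr (\<rho>2 y) \<noteq> of_nat n2"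
        using separation[OF assms(1,2) N _ y(2)] y(1) Mc by blast
      obtain n3 \<rho>3 where s3: "irreducible_rep G n3 \<rho>3" "\<forall>m\<in>M. \<rho>3 m = 1\<^sub>m n3" "mat_tr (\<rho>3 z) \<noteq> of_nat n3"
        using separation[OF assms(1,2,5) _ z(2)] z(1) Dc by blast
      have r1: "is_rep G n1 \<rho>1" and r2: "is_rep G n2 \<rho>2" and r3: "is_rep G n3 \<rho>3"
        using s1 s2 s3 unfolding irreducible_rep_def by auto
      have M1: "M \<subseteq> K n1 \<rho>1" using Msub[OF r1 s1(2)] .
      have M3: "M \<subseteq> K n3 \<rho>3" using Msub[OF r3 s3(2)] .
      have N2: "N \<subseteq> K n2 \<rho>2" using s2(2) Nc unfolding K_def by auto
      have xK1: "x \<notin> K n1 \<rho>1" using s1(3) unfolding K_def by auto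
      have yK2: "y \<notin> K n2 \<rho>2" using s2(3) unfolding K_def by auto
      have zK3: "z \<notin> K n3 \<rho>3" using s3(3) unfolding K_def by auto
      have "n2 \<noteq> 1"
      proof
        assume "n2 = 1"
        then show False using lin[of \<rho>2] r2 y(1) yK2 assms(6) by auto
      qed
      then have n2: "n2 > 1" using r2 unfolding is_rep_def by auto
      have "n3 \<noteq> 1"
      proof
        assume "n3 = 1"
        then show False using lin[of \<rho>3] r3 z zK3 by auto
      qed
      then have n3: "n3 > 1" using r3 unfolding is_rep_def by auto
      have "n1 \<noteq> 1 \<Longrightarrow> False"
      proof -
        assume "n1 \<noteq> 1"
        then have "n1 > 1" using r1 unfolding is_rep_def by auto
        then show False using comp[OF s1(1) s2(1) _ n2] M1 N2 x y xK1 yK2 by blast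
      qed
      then have n1: "n1 = 1" by blast
      have "K n2 \<rho>2 \<subseteq> K n3 \<rho>3" using comp[OF s2(1) s3(1) n2 n3] M3 y yK2 by blast
      then have xK3: "x \<in> K n3 \<rho>3" using N2 x by blast
      define \<rho>4 where "\<rho>4 = (\<lambda>g. (\<rho>1 g $$ (0,0)) \<cdot>\<^sub>m \<rho>3 g)"
      have s4: "irreducible_rep G n3 \<rho>4" unfolding \<rho>4_def
        using tensor_irr[OF assms(1) s3(1)] r1 n1 by simp
      have tr4: "mat_tr (\<rho>4 g) = \<rho>1 g $$ (0,0) * mat_tr (\<rho>3 g)" if "g \<in> carrier G" for g
        unfolding \<rho>4_def using r3 that mat_tr_smult unfolding is_rep_def by blast
      have tr1: "mat_tr (\<rho>1 g) = \<rho>1 g $$ (0,0)" if "g \<in> carrier G" for g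
        using mat_tr_1[of "\<rho>1 g"] r1 n1 that unfolding is_rep_def by auto
      have M4: "M \<subseteq> K n3 \<rho>4"
      proof
        fix m assume m: "m \<in> M"
        then have "m \<in> carrier G" using Mc by auto
        then show "m \<in> K n3 \<rho>4" using tr4 m s1(2) s3(2) n1 unfolding K_def by auto
      qed
      have "K n2 \<rho>2 \<subseteq> K n3 \<rho>4" using comp[OF s2(1) s4 n2 n3] M4 y yK2 by blast
      then have xK4: "x \<in> K n3 \<rho>4" using N2 x by blast
      have xc: "x \<in> carrier G" using x Nc by auto
      have "\<rho>1 x $$ (0,0) * of_nat n3 = of_nat n3"
        using xK4 xK3 tr4[OF xc] unfolding K_def by auto
      then have "\<rho>1 x $$ (0,0) = 1" using n3 by simp
      then have "x \<in> K n1 \<rho>1" using tr1[OF xc] xc n1 unfolding K_def by simp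
      then show False using xK1 by blast
    qed
  qed
  then show ?thesis unfolding waist_def using assms(5) by blast
qed


end
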